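(* Let $R$ be a commutative ring and $n\ge3$. Let $(v,w)\in H(R^n)$ with $q(v,w)=v\cdot w^{\intercal}=1$, and let $g\in\operatorname{Epin}_{2n}(R)$. Then, computing in the Clifford algebra $\mathrm{Cl}$ of $(H(R^n),q)$, there exists $\sigma\in E_n(R)$ such that $$g\,(v,w)\,g^{-1}=\big(v\sigma,\;w(\sigma^{\intercal})^{-1}\big).$$
   Context: $H(R^n)=R^n\oplus(R^n)^*$ (elements written as pairs $(v,w)$ of row vectors in $R^n$) with quadratic form $q(v,w)=v\cdot w^{\intercal}$; let $e_1,\dots,e_n,f_1,\dots,f_n$ be its standard basis. $\mathrm{Cl}=\mathrm{Cl}_0\oplus\mathrm{Cl}_1$ is the Clifford algebra of $(H(R^n),q)$ with its $\mathbb{Z}/2$-grading, containing $H(R^n)$ in $\mathrm{Cl}_1$; $x\mapsto x^*$ is its canonical involution (the anti-automorphism that is the identity on $H(R^n)$). $\operatorname{Spin}_{2n}(R)=\{x\in\mathrm{Cl}_0: xx^*=1,\ xH(R^n)x^{-1}=H(R^n)\}$, and $\pi:\operatorname{Spin}_{2n}(R)\to O(H(R^n))$, $\pi(g)(u)=gug^{-1}$. Let $\partial=(1\ n+1)\cdots(n\ 2n)$ and $E^o_{ij}(\lambda)=I_{2n}+\lambda(e_{ij}-e_{\partial(j)\partial(i)})$ for $1\le i\ne j\le 2n$, $\lambda\in R$ ($e_{ij}$ matrix units); $EO_{2n}(R)$ is the group they generate, viewed as a group of orthogonal transformations of $H(R^n)$ via matrices in the ordered basis $(e_1,\dots,e_n,f_1,\dots,f_n)$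 (this group is closed under transposition). $\operatorname{Epin}_{2n}(R)=\pi^{-1}(EO_{2n}(R))$. $E_n(R)$ is the subgroup of $GL_n(R)$ generated by elementary matrices $I+\lambda e_{ij}$, $i\ne j$. *)

theory Defs
  imports "Jordan_Normal_Form.Matrix"
begin

definition unit_mat :: "nat \<Rightarrow> nat \<Rightarrow> nat \<Rightarrow> 'a::comm_ring_1 mat" where
  "unit_mat m i j = mat m m (\<lambda>(a,b). if a = i \<and> b = j then 1 else 0)"

definition elem_mat :: "nat \<Rightarrow> nat \<Rightarrow> nat \<Rightarrow> 'a::comm_ring_1 \<Rightarrow> 'a mat" where
  "elem_mat n i j l = 1\<^sub>m n + l \<cdot>\<^sub>m unit_mat n i j"

text \<open>E_n(R): the subgroup of GL_n(R) generated by elementary matrices.  Since the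
  inverse of I + l e_ij is I - l e_ij, this is the set of finite products of generators.\<close>
inductive_set elem_group :: "nat \<Rightarrow> 'a::comm_ring_1 mat set" for n where
  one: "1\<^sub>m n \<in> elem_group n"
| step: "A \<in> elem_group n \<Longrightarrow> i < n \<Longrightarrow> j < n \<Longrightarrow> i \<noteq> j \<Longrightarrow>
         elem_mat n i j l * A \<in> elem_group n"

text \<open>The involution partial of the index set {0..2n-1}: k <-> k+n (0-based version of
  (1 n+1)...(n 2n)).\<close>
definition hpart :: "nat \<Rightarrow> nat \<Rightarrow> nat" where
  "hpart n k = (if k < n then k + n else k - n)"

definition eo_gen :: "nat \<Rightarrow> nat \<Rightarrow> nat \<Rightarrow> 'a::comm_ring_1 \<Rightarrow> 'a mat" where
  "eo_gen n i j l = 1\<^sub>m (2*n) + l \<cdot>\<^sub>m (unit_mat (2*n) i j - unit_mat (2*n) (hpart n j) (hpart n i))"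

text \<open>EO_2n(R): group generated by the E^o_ij(l); generators are closed under inverses
  (E^o_ij(l)^{-1} = E^o_ij(-l)), so it is the set of finite products of generators.\<close>
inductive_set eo_group :: "nat \<Rightarrow> 'a::comm_ring_1 mat set" for n where
  one: "1\<^sub>m (2*n) \<in> eo_group n"
| step: "A \<in> eo_group n \<Longrightarrow> i < 2*n \<Longrightarrow> j < 2*n \<Longrightarrow> i \<noteq> j \<Longrightarrow>
         eo_gen n i j l * A \<in> eo_group n"

text \<open>H(R^n) is free with basis e_1..e_n,f_1..f_n; an element (v,w) is represented by
  its coordinate vector v @ w of dimension 2n.  The tensor algebra T(H(R^n)) is the free
  R-module on words over the letters 0..2n-1 (letter k < n is e_{k+1}, letter n+k is f_{k+1}),
  represented by finitely supported functions on words.\<close>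

type_synonym 'a tens = "nat list \<Rightarrow> 'a"

definition tens_carrier :: "nat \<Rightarrow> 'a::comm_ring_1 tens set" where
  "tens_carrier n = {f. finite {w. f w \<noteq> 0} \<and> (\<forall>w. f w \<noteq> 0 \<longrightarrow> set w \<subseteq> {..<2*n})}"

definition tzero :: "'a::comm_ring_1 tens" where "tzero = (\<lambda>_. 0)"
definition tone :: "'a::comm_ring_1 tens" where "tone = (\<lambda>w. if w = [] then 1 else 0)"
definition tadd :: "'a::comm_ring_1 tens \<Rightarrow> 'a tens \<Rightarrow> 'a tens" where
  "tadd f g = (\<lambda>w. f w + g w)"
definition tminus :: "'a::comm_ring_1 tens \<Rightarrow> 'a tens \<Rightarrow> 'a tens" where
  "tminus f g = (\<lambda>w. f w - g w)"
definition tsmult :: "'a::comm_ring_1 \<Rightarrow> 'a tens \<Rightarrow> 'a tens" where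
  "tsmult c f = (\<lambda>w. c * f w)"
definition tmul :: "'a::comm_ring_1 tens \<Rightarrow> 'a tens \<Rightarrow> 'a tens" where
  "tmul f g = (\<lambda>w. \<Sum>k\<le>length w. f (take k w) * g (drop k w))"

definition hyp_emb :: "nat \<Rightarrow> 'a::comm_ring_1 vec \<Rightarrow> 'a tens" where
  "hyp_emb n c = (\<lambda>w. case w of [k] \<Rightarrow> (if k < 2*n then c $ k else 0) | _ \<Rightarrow> 0)"

definition hyp_elems :: "nat \<Rightarrow> 'a::comm_ring_1 tens set" where
  "hyp_elems n = hyp_emb n ` carrier_vec (2*n)"

definition hq :: "nat \<Rightarrow> 'a::comm_ring_1 vec \<Rightarrow> 'a" where
  "hq n c = (\<Sum>i<n. c $ i * c $ (n + i))"

definition clif_rel :: "nat \<Rightarrow> 'a::comm_ring_1 vec \<Rightarrow> 'a tens" where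
  "clif_rel n c = tminus (tmul (hyp_emb n c) (hyp_emb n c)) (tsmult (hq n c) tone)"

text \<open>The two-sided ideal of T generated by u (x) u - q(u), u in H(R^n).\<close>
inductive_set clif_ideal :: "nat \<Rightarrow> 'a::comm_ring_1 tens set" for n where
  zero: "tzero \<in> clif_ideal n"
| step: "x \<in> clif_ideal n \<Longrightarrow> a \<in> tens_carrier n \<Longrightarrow> b \<in> tens_carrier n \<Longrightarrow>
         c \<in> carrier_vec (2*n) \<Longrightarrow> tadd x (tmul a (tmul (clif_rel n c) b)) \<in> clif_ideal n"

text \<open>Equality in Cl = T / I.\<close>
definition clif_eq :: "nat \<Rightarrow> 'a::comm_ring_1 tens \<Rightarrow> 'a tens \<Rightarrow> bool" where
  "clif_eq n x y \<longleftrightarrow> tminus x y \<in> clif_ideal n"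

text \<open>Canonical involution: reversal of words (identity on H, anti-multiplicative);
  it preserves the ideal, hence descends to Cl.\<close>
definition tinv :: "'a::comm_ring_1 tens \<Rightarrow> 'a tens" where
  "tinv f = (\<lambda>w. f (rev w))"

definition even_tens :: "'a::comm_ring_1 tens \<Rightarrow> bool" where
  "even_tens f \<longleftrightarrow> (\<forall>w. f w \<noteq> 0 \<longrightarrow> even (length w))"

definition clif_inverse :: "nat \<Rightarrow> 'a::comm_ring_1 tens \<Rightarrow> 'a tens \<Rightarrow> bool" where
  "clif_inverse n x y \<longleftrightarrow> y \<in> tens_carrier n \<and> clif_eq n (tmul x y) tone \<and> clif_eq n (tmul y x) tone"

text \<open>Spin_2n(R) = {x in Cl_0 : x x^* = 1, x H x^{-1} = H} (elements given by representatives).\<close>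
definition spin_set :: "nat \<Rightarrow> 'a::comm_ring_1 tens set" where
  "spin_set n = {x \<in> tens_carrier n.
      (\<exists>x0 \<in> tens_carrier n. even_tens x0 \<and> clif_eq n x x0) \<and>
      clif_eq n (tmul x (tinv x)) tone \<and>
      (\<exists>y. clif_inverse n x y \<and>
         (\<forall>u \<in> hyp_elems n. \<exists>u' \<in> hyp_elems n. clif_eq n (tmul x (tmul u y)) u') \<and>
         (\<forall>u' \<in> hyp_elems n. \<exists>u \<in> hyp_elems n. clif_eq n (tmul x (tmul u y)) u'))}"

text \<open>Epin_2n(R) = pi^{-1}(EO_2n(R)), pi(g)(u) = g u g^{-1}; the matrix of pi(g) in the basis
  (e_1..e_n,f_1..f_n) acts on coordinate (column) vectors.\<close>
definition epin_set :: "nat \<Rightarrow> 'a::comm_ring_1 tens set" where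
  "epin_set n = {g \<in> spin_set n. \<exists>M \<in> eo_group n. \<forall>y. clif_inverse n g y \<longrightarrow>
      (\<forall>c \<in> carrier_vec (2*n). clif_eq n (tmul g (tmul (hyp_emb n c) y)) (hyp_emb n (M *\<^sub>v c)))}"

end

theory Submission
  imports Defs
begin

lemma elem_mat_alt: "elem_mat n i j l = mat n n (\<lambda>(r,c). (if r = c then 1 else 0) + (if r = i \<and> c = j then l else 0))"
  unfolding elem_mat_def unit_mat_def by (rule eq_matI) auto

lemma elem_mat_carrier[simp]: "elem_mat n i j l \<in> carrier_mat n n"
  unfolding elem_mat_def unit_mat_def by auto

lemma elem_mat_dims[simp]: "dim_row (elem_mat n i j l) = n" "dim_col (elem_mat n i j l) = n"
  unfolding elem_mat_def unit_mat_def by auto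

lemma elem_mat_index: "r < n \<Longrightarrow> c < n \<Longrightarrow> elem_mat n i j l $$ (r,c) = (if r = c then 1 else 0) + (if r = i \<and> c = j then l else 0)"
  unfolding elem_mat_alt by simp

lemma elem_mult_index:
  assumes "i < n" "j < n" "A \<in> carrier_mat n m" "r < n" "c < m"
  shows "(elem_mat n i j l * A) $$ (r,c) = A $$ (r,c) + (if r = i then l * A $$ (j,c) else 0)"
proof -
  have "(elem_mat n i j l * A) $$ (r,c) = (\<Sum>t\<in>{0..<n}. ((if r = t then 1 else 0) + (if r = i \<and> t = j then l else 0)) * A $$ (t,c))"
    using assms by (simp add: elem_mat_alt scalar_prod_def)
  also have "\<dots> = (\<Sum>t\<in>{0..<n}. (if r = t then A $$ (t,c) else 0) + (if r = i \<and> t = j then l * A $$ (t,c) else 0))"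
    by (rule sum.cong) (auto simp: distrib_right)
  also have "\<dots> = (\<Sum>t\<in>{0..<n}. (if r = t then A $$ (t,c) else 0)) + (\<Sum>t\<in>{0..<n}. (if r = i \<and> t = j then l * A $$ (t,c) else 0))"
    by (simp add: sum.distrib)
  also have "\<dots> = A $$ (r,c) + (if r = i then l * A $$ (j,c) else 0)"
    using assms by (simp add: sum.delta sum.delta')
  finally show ?thesis .
qed

lemma elem_mult_index':
  assumes "i < n" "j < n" "dim_row A = n" "r < n" "c < dim_col A"
  shows "(elem_mat n i j l * A) $$ (r,c) = A $$ (r,c) + (if r = i then l * A $$ (j,c) else 0)"
proof -
  have "A \<in> carrier_mat n (dim_col A)" using assms(3) unfolding carrier_mat_def by simp
  then show ?thesis by (rule elem_mult_index[OF assms(1,2) _ assms(4,5)])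
qed

lemma elem_mult_vec:
  assumes "i < n" "j < n" "v \<in> carrier_vec n"
  shows "elem_mat n i j l *\<^sub>v v = vec n (\<lambda>r. v $ r + (if r = i then l * v $ j else 0))"
proof (rule eq_vecI)
  fix r assume r: "r < dim_vec (vec n (\<lambda>r. v $ r + (if r = i then l * v $ j else 0)))"
  hence r: "r < n" by simp
  have "(elem_mat n i j l *\<^sub>v v) $ r = (\<Sum>t\<in>{0..<n}. ((if r = t then 1 else 0) + (if r = i \<and> t = j then l else 0)) * v $ t)"
    using assms r by (simp add: elem_mat_alt scalar_prod_def)
  also have "\<dots> = (\<Sum>t\<in>{0..<n}. (if r = t then v $ t else 0) + (if r = i \<and> t = j then l * v $ t else 0))"
    by (rule sum.cong) (auto simp: distrib_right)
  also have "\<dots> = (\<Sum>t\<in>{0..<n}. (if r = t then v $ t else 0)) + (\<Sum>t\<in>{0..<n}. (if r = i \<and> t = j then l * v $ t else 0))"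
    by (simp add: sum.distrib)
  also have "\<dots> = v $ r + (if r = i then l * v $ j else 0)"
    using assms r by (simp add: sum.delta sum.delta')
  finally show "(elem_mat n i j l *\<^sub>v v) $ r = vec n (\<lambda>r. v $ r + (if r = i then l * v $ j else 0)) $ r"
    using r by simp
qed simp

lemma elem_transpose: "transpose_mat (elem_mat n i j l) = elem_mat n j i l"
  unfolding elem_mat_alt by (rule eq_matI) auto

lemma elem_inv: assumes "i < n" "j < n" "i \<noteq> j"
  shows "elem_mat n i j l * elem_mat n i j (-l) = 1\<^sub>m n"
proof (rule eq_matI)
  fix r c assume "r < dim_row (1\<^sub>m n)" "c < dim_col (1\<^sub>m n)"
  thus "(elem_mat n i j l * elem_mat n i j (-l)) $$ (r,c) = 1\<^sub>m n $$ (r,c)"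
    using assms by (subst elem_mult_index) (auto simp: elem_mat_alt)
qed auto

lemma elem_group_carrier: "A \<in> elem_group n \<Longrightarrow> A \<in> carrier_mat n n"
  by (induction rule: elem_group.induct) (auto intro: mult_carrier_mat)

lemma elem_group_mult: "A \<in> elem_group n \<Longrightarrow> B \<in> elem_group n \<Longrightarrow> A * B \<in> elem_group n"
proof (induction rule: elem_group.induct)
  case one
  then show ?case using elem_group_carrier by (metis left_mult_one_mat)
next
  case (step A i j l)
  have "elem_mat n i j l * A * B = elem_mat n i j l * (A * B)"
    using step elem_group_carrier by (meson assoc_mult_mat elem_mat_carrier)
  then show ?case using step elem_group.step by metis
qed

lemma elem_group_elem: assumes "i < n" "j < n" "i \<noteq> j" shows "elem_mat n i j l \<in> elem_group n"
proof -
  have "elem_mat n i j l * 1\<^sub>m n \<in> elem_group n"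
    by (rule elem_group.step[OF elem_group.one]) (use assms in auto)
  thus ?thesis by simp
qed

lemma elem_group_transpose: "A \<in> elem_group n \<Longrightarrow> transpose_mat A \<in> elem_group n"
proof (induction rule: elem_group.induct)
  case one
  then show ?case by (simp add: elem_group.one)
next
  case (step A i j l)
  have "transpose_mat (elem_mat n i j l * A) = transpose_mat A * elem_mat n j i l"
    using transpose_mult[OF elem_mat_carrier elem_group_carrier[OF step(1)]] by (simp add: elem_transpose)
  then show ?case using step elem_group_mult elem_group_elem by metis
qed

definition xv :: "nat \<Rightarrow> nat \<Rightarrow> (nat \<Rightarrow> 'a::comm_ring_1) \<Rightarrow> nat \<Rightarrow> 'a" where
  "xv a b u t = (if t = a then u b else if t = b then - u a else 0)"

definition R1 :: "nat \<Rightarrow> 'a::comm_ring_1 \<Rightarrow> (nat \<Rightarrow> 'a) \<Rightarrow> (nat \<Rightarrow> 'a) \<Rightarrow> 'a mat" where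
  "R1 n l s y = mat n n (\<lambda>(r,c). (if r = c then 1 else 0) + l * s r * y c)"

lemma R1_carrier[simp]: "R1 n l s y \<in> carrier_mat n n"
  and R1_dims[simp]: "dim_row (R1 n l s y) = n" "dim_col (R1 n l s y) = n"
  unfolding R1_def by auto

lemma R1_transpose: "transpose_mat (R1 n l s y) = R1 n l y s"
  unfolding R1_def by (rule eq_matI) auto

lemma sum_xv: assumes "a < n" "b < n" "a \<noteq> b"
  shows "(\<Sum>t<n. xv a b u t * f t) = u b * f a - u a * f b"
proof -
  have "(\<Sum>t<n. xv a b u t * f t) = (\<Sum>t<n. (if t = a then u b * f t else 0) + (if t = b then - u a * f t else 0))"
    by (rule sum.cong) (use assms in \<open>auto simp: xv_def\<close>)
  also have "\<dots> = u b * f a - u a * f b" using assms by (simp add: sum.distrib sum.delta)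
  finally show ?thesis .
qed

lemma sum_xv_self: assumes "a < n" "b < n" "a \<noteq> b"
  shows "(\<Sum>t<n. xv a b u t * u t) = 0"
  using sum_xv[OF assms, of u u] by (simp add: mult.commute)

lemma R1_mult_vec:
  assumes "v \<in> carrier_vec n"
  shows "R1 n l s y *\<^sub>v v = vec n (\<lambda>r. v $ r + l * s r * (\<Sum>t<n. y t * v $ t))"
proof (rule eq_vecI)
  fix r assume r: "r < dim_vec (vec n (\<lambda>r. v $ r + l * s r * (\<Sum>t<n. y t * v $ t)))"
  hence r: "r < n" by simp
  have "(R1 n l s y *\<^sub>v v) $ r = (\<Sum>t\<in>{0..<n}. ((if r = t then 1 else 0) + l * s r * y t) * v $ t)"
    using assms r by (simp add: R1_def scalar_prod_def)
  also have "\<dots> = (\<Sum>t\<in>{0..<n}. (if r = t then v $ t else 0) + l * s r * (y t * v $ t))"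
    by (rule sum.cong) (auto simp: algebra_simps)
  also have "\<dots> = v $ r + l * s r * (\<Sum>t<n. y t * v $ t)"
    using assms r by (simp add: sum.distrib sum.delta sum_distrib_left atLeast0LessThan)
  finally show "(R1 n l s y *\<^sub>v v) $ r = vec n (\<lambda>r. v $ r + l * s r * (\<Sum>t<n. y t * v $ t)) $ r"
    using r by simp
qed simp

lemma R1_mult:
  assumes "(\<Sum>t<n. y t * s t) = 0"
  shows "R1 n l s y * R1 n m s y = R1 n (l + m) s y"
proof (rule eq_matI)
  fix r c assume rc: "r < dim_row (R1 n (l + m) s y)" "c < dim_col (R1 n (l + m) s y)"
  hence r: "r < n" and c: "c < n" by auto
  have "(R1 n l s y * R1 n m s y) $$ (r,c) =
     (\<Sum>t\<in>{0..<n}. ((if r = t then 1 else 0) + l * s r * y t) * ((if t = c then 1 else 0) + m * s t * y c))"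
    using r c by (simp add: R1_def scalar_prod_def)
  also have "\<dots> = (\<Sum>t\<in>{0..<n}. (if r = t then ((if t = c then 1 else 0) + m * s t * y c) else 0)
         + (if t = c then l * s r * y t else 0) + (l * m * s r * y c) * (y t * s t))"
    by (rule sum.cong) (auto simp: algebra_simps)
  also have "\<dots> = ((if r = c then 1 else 0) + m * s r * y c) + l * s r * y c + (l * m * s r * y c) * (\<Sum>t<n. y t * s t)"
    using r c by (simp add: sum.distrib sum.delta sum.delta' sum_distrib_left atLeast0LessThan)
  also have "\<dots> = R1 n (l + m) s y $$ (r,c)"
    using r c assms by (simp add: R1_def algebra_simps)
  finally show "(R1 n l s y * R1 n m s y) $$ (r,c) = R1 n (l + m) s y $$ (r,c)" .
qed auto

lemma R1_zero: "R1 n 0 s y = 1\<^sub>m n"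
  unfolding R1_def by (rule eq_matI) auto

lemma R1_inv:
  assumes "(\<Sum>t<n. y t * s t) = 0"
  shows "R1 n l s y * R1 n (-l) s y = 1\<^sub>m n" "R1 n (-l) s y * R1 n l s y = 1\<^sub>m n"
  using R1_mult[OF assms, of l "-l"] R1_mult[OF assms, of "-l" l] by (simp_all add: R1_zero)

definition Tm :: "nat \<Rightarrow> 'a::comm_ring_1 \<Rightarrow> (nat \<Rightarrow> 'a) \<Rightarrow> nat \<Rightarrow> nat \<Rightarrow> nat set \<Rightarrow> 'a mat" where
  "Tm n l u a b K = mat n n (\<lambda>(r,c). (if r = c then 1 else 0) + (if r \<in> K \<or> r = a \<or> r = b then l * u r * xv a b u c else 0))"

lemma Tm_carrier[simp]: "Tm n l u a b K \<in> carrier_mat n n"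
  unfolding Tm_def by auto

lemma Tm_dims[simp]: "dim_row (Tm n l u a b K) = n" "dim_col (Tm n l u a b K) = n"
  unfolding Tm_def by auto

definition Xf :: "nat \<Rightarrow> nat \<Rightarrow> nat \<Rightarrow> 'a::comm_ring_1 \<Rightarrow> 'a \<Rightarrow> nat \<Rightarrow> nat \<Rightarrow> 'a" where
  "Xf a b k p q r c = (if c = k then (if r = a then p else if r = b then q else 0) else 0)"
definition Yf :: "nat \<Rightarrow> nat \<Rightarrow> nat \<Rightarrow> 'a::comm_ring_1 \<Rightarrow> 'a \<Rightarrow> 'a \<Rightarrow> nat \<Rightarrow> nat \<Rightarrow> 'a" where
  "Yf a b k l p q r c = (if r = k then l * (if c = a then q else if c = b then -p else 0) else 0)"
definition Zf :: "nat \<Rightarrow> nat \<Rightarrow> 'a::comm_ring_1 \<Rightarrow> (nat \<Rightarrow> 'a) \<Rightarrow> nat \<Rightarrow> nat \<Rightarrow> 'a" where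
  "Zf a b l u r c = (if r = a \<or> r = b then l * u r * xv a b u c else 0)"

lemma Tm_empty_eq:
  assumes "a < n" "b < n" "k < n" "a \<noteq> b" "a \<noteq> k" "b \<noteq> k"
  shows "Tm n l u a b {} = elem_mat n a k (u a) * (elem_mat n b k (u b) * (elem_mat n k a (l * u b) *
     (elem_mat n k b (-(l * u a)) * (elem_mat n a k (-u a) * (elem_mat n b k (-u b) *
     (elem_mat n k a (-(l * u b)) * (elem_mat n k b (l * u a) * 1\<^sub>m n)))))))"
proof -
  note sy = assms(4-6)[symmetric]
  let ?p = "u a" and ?q = "u b"
  define A4 where "A4 = mat n n (\<lambda>(r,c). (if r = c then 1 else 0) - Yf a b k l ?p ?q r c)"
  define A3 where "A3 = mat n n (\<lambda>(r,c). (if r = c then 1 else 0) - Xf a b k ?p ?q r c - Yf a b k l ?p ?q r c + Zf a b l u r c)"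
  define A2 where "A2 = mat n n (\<lambda>(r,c). (if r = c then 1 else 0) - Xf a b k ?p ?q r c + Zf a b l u r c)"
  have c4: "A4 \<in> carrier_mat n n" "A3 \<in> carrier_mat n n" "A2 \<in> carrier_mat n n"
    unfolding A4_def A3_def A2_def by auto
  have e4: "elem_mat n k a (-(l * u b)) * (elem_mat n k b (l * u a) * 1\<^sub>m n) = A4"
  proof (rule eq_matI)
    fix r c assume "r < dim_row A4" "c < dim_col A4"
    hence r: "r < n" "c < n" unfolding A4_def by auto
    show "(elem_mat n k a (-(l * u b)) * (elem_mat n k b (l * u a) * 1\<^sub>m n)) $$ (r,c) = A4 $$ (r,c)"
      using assms sy r by (simp add: elem_mult_index' elem_mat_index del: index_mult_mat(1)) (auto simp: A4_def Yf_def algebra_simps)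
  qed (auto simp: A4_def)
  have e3: "elem_mat n a k (-u a) * (elem_mat n b k (-u b) * A4) = A3"
  proof (rule eq_matI)
    fix r c assume "r < dim_row A3" "c < dim_col A3"
    hence r: "r < n" "c < n" unfolding A3_def by auto
    show "(elem_mat n a k (-u a) * (elem_mat n b k (-u b) * A4)) $$ (r,c) = A3 $$ (r,c)"
      using assms sy r c4 by (simp add: elem_mult_index' elem_mat_index del: index_mult_mat(1)) (auto simp: A4_def A3_def Xf_def Yf_def Zf_def xv_def algebra_simps)
  qed (auto simp: A3_def A4_def)
  have e2: "elem_mat n k a (l * u b) * (elem_mat n k b (-(l * u a)) * A3) = A2"
  proof (rule eq_matI)
    fix r c assume "r < dim_row A2" "c < dim_col A2"
    hence r: "r < n" "c < n" unfolding A2_def by auto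
    show "(elem_mat n k a (l * u b) * (elem_mat n k b (-(l * u a)) * A3)) $$ (r,c) = A2 $$ (r,c)"
      using assms sy r c4 by (simp add: elem_mult_index' elem_mat_index del: index_mult_mat(1)) (auto simp: A2_def A3_def Xf_def Yf_def Zf_def xv_def algebra_simps)
  qed (auto simp: A3_def A2_def)
  have e1: "elem_mat n a k (u a) * (elem_mat n b k (u b) * A2) = Tm n l u a b {}"
  proof (rule eq_matI)
    fix r c assume "r < dim_row (Tm n l u a b {})" "c < dim_col (Tm n l u a b {})"
    hence r: "r < n" "c < n" by auto
    show "(elem_mat n a k (u a) * (elem_mat n b k (u b) * A2)) $$ (r,c) = Tm n l u a b {} $$ (r,c)"
      using assms sy r c4 by (simp add: elem_mult_index' elem_mat_index del: index_mult_mat(1)) (auto simp: A2_def Tm_def Xf_def Zf_def xv_def algebra_simps)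
  qed (auto simp: A2_def)
  have m: "M \<in> carrier_mat n n \<Longrightarrow> elem_mat n i j x * (elem_mat n i' j' y * M) = (elem_mat n i j x * elem_mat n i' j' y) * M" for M i j x i' j' y
    by (metis assoc_mult_mat elem_mat_carrier)
  show ?thesis
    by (simp only: e4 e3 e2 e1)
qed

lemma Tm_empty:
  assumes "a < n" "b < n" "k < n" "a \<noteq> b" "a \<noteq> k" "b \<noteq> k"
  shows "Tm n l u a b {} \<in> elem_group n"
  unfolding Tm_empty_eq[OF assms]
  by (intro elem_group.step elem_group.one) (use assms in auto)

lemma Tm_insert_eq:
  assumes "a < n" "b < n" "k < n" "a \<noteq> b" "a \<noteq> k" "b \<noteq> k" "k \<notin> K"
  shows "Tm n l u a b (insert k K) = elem_mat n k a (l * u k * u b) * (elem_mat n k b (-(l * u k * u a)) * Tm n l u a b K)"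
  (is "_ = ?P")
proof (rule eq_matI)
  fix r c assume rc: "r < dim_row ?P" "c < dim_col ?P"
  hence r: "r < n" and c: "c < n" by auto
  show "Tm n l u a b (insert k K) $$ (r, c) = ?P $$ (r,c)"
    using assms assms(4-6)[symmetric] r c by (simp add: elem_mult_index' elem_mat_index del: index_mult_mat(1)) (auto simp: Tm_def xv_def algebra_simps)
qed auto

lemma Tm_group:
  assumes "finite K" "a < n" "b < n" "k < n" "a \<noteq> b" "a \<noteq> k" "b \<noteq> k"
    "K \<subseteq> {..<n}" "a \<notin> K" "b \<notin> K"
  shows "Tm n l u a b K \<in> elem_group n"
  using assms
proof (induction K rule: finite_induct)
  case empty
  then show ?case using Tm_empty by blast
next
  case (insert k' K)
  have "Tm n l u a b (insert k' K) = elem_mat n k' a (l * u k' * u b) * (elem_mat n k' b (-(l * u k' * u a)) * Tm n l u a b K)"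
    by (rule Tm_insert_eq) (use insert in auto)
  moreover have "Tm n l u a b K \<in> elem_group n" using insert by auto
  ultimately show ?case
    by (metis elem_group.step insert.prems insert_subset lessThan_iff insert_iff)
qed

lemma suslin:
  assumes "n \<ge> 3" "a < n" "b < n" "a \<noteq> b"
  shows "R1 n l u (xv a b u) \<in> elem_group n"
proof -
  obtain k where k: "k < 3" "k \<noteq> a" "k \<noteq> b"
  proof -
    have "(0::nat) \<noteq> a \<and> 0 \<noteq> b \<or> (1::nat) \<noteq> a \<and> 1 \<noteq> b \<or> (2::nat) \<noteq> a \<and> 2 \<noteq> b"
      using assms(4) by arith
    thus ?thesis
    proof (elim disjE conjE)
      assume "(0::nat) \<noteq> a" "0 \<noteq> b" thus ?thesis using that[of 0] by simp
    next
      assume "(1::nat) \<noteq> a" "1 \<noteq> b" thus ?thesis using that[of 1] by simp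
    next
      assume "(2::nat) \<noteq> a" "2 \<noteq> b" thus ?thesis using that[of 2] by simp
    qed
  qed
  let ?K = "{..<n} - {a,b}"
  have "Tm n l u a b ?K \<in> elem_group n"
    by (rule Tm_group[where k = k]) (use assms k in auto)
  moreover have "Tm n l u a b ?K = R1 n l u (xv a b u)"
    unfolding Tm_def R1_def by (rule eq_matI) auto
  ultimately show ?thesis by simp
qed

lemma hpart_lt: "k < 2*n \<Longrightarrow> hpart n k < 2*n"
  unfolding hpart_def by auto

lemma eo_gen_index: "r < 2*n \<Longrightarrow> t < 2*n \<Longrightarrow> eo_gen n i j l $$ (r,t) =
   (if r = t then 1 else 0) + l * ((if r = i \<and> t = j then 1 else 0) - (if r = hpart n j \<and> t = hpart n i then 1 else 0))"
  unfolding eo_gen_def unit_mat_def by simp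

lemma eo_gen_alt: "eo_gen n i j l = mat (2*n) (2*n) (\<lambda>(r,t).
   (if r = t then 1 else 0) + l * ((if r = i \<and> t = j then 1 else 0) - (if r = hpart n j \<and> t = hpart n i then 1 else 0)))"
  unfolding eo_gen_def unit_mat_def by (rule eq_matI) auto

lemma eo_gen_dims[simp]: "dim_row (eo_gen n i j l) = 2*n" "dim_col (eo_gen n i j l) = 2*n"
  unfolding eo_gen_def unit_mat_def by auto

lemma eo_gen_carrier[simp]: "eo_gen n i j l \<in> carrier_mat (2*n) (2*n)"
  unfolding carrier_mat_def by simp

lemma if3_mult: "((if P then 1 else 0) + l * ((if Q then 1 else 0) - (if R then 1 else 0))) * (x::'a::comm_ring_1) =
   (if P then x else 0) + (if Q then l * x else 0) - (if R then l * x else 0)"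
  by (cases P; cases Q; cases R) (simp_all add: algebra_simps)

lemma sum_if_conj: "finite S \<Longrightarrow> j \<in> S \<Longrightarrow> (\<Sum>t\<in>S. (if P \<and> t = j then f t else 0)) = (if P then f j else (0::'a::comm_ring_1))"
  by (cases P) simp_all

lemma if2_collect: "(y::'a::comm_ring_1) + (if Q then l * a else 0) - (if R then l * b else 0) = y + l * ((if Q then a else 0) - (if R then b else 0))"
  by (cases Q; cases R) (simp_all add: algebra_simps)

lemma eo_gen_mult_vec_index:
  assumes "i < 2*n" "j < 2*n" "c \<in> carrier_vec (2*n)" "r < 2*n"
  shows "(eo_gen n i j l *\<^sub>v c) $ r = c $ r + l * ((if r = i then c $ j else 0) - (if r = hpart n j then c $ (hpart n i) else 0))"
proof -
  have h: "hpart n i < 2*n" "hpart n j < 2*n" using assms hpart_lt by auto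
  have "(eo_gen n i j l *\<^sub>v c) $ r = row (eo_gen n i j l) r \<bullet> c"
    using assms unfolding eo_gen_alt by (subst index_mult_mat_vec) auto
  also have "\<dots> = (\<Sum>t\<in>{0..<2*n}. ((if r = t then 1 else 0) + l * ((if r = i \<and> t = j then 1 else 0) - (if r = hpart n j \<and> t = hpart n i then 1 else 0))) * c $ t)"
    using assms unfolding eo_gen_alt scalar_prod_def by (intro sum.cong) auto
  also have "\<dots> = (\<Sum>t\<in>{0..<2*n}. (if r = t then c $ t else 0) + (if r = i \<and> t = j then l * c $ t else 0) - (if r = hpart n j \<and> t = hpart n i then l * c $ t else 0))"
    by (rule sum.cong[OF refl], rule if3_mult)
  also have "\<dots> = (\<Sum>t\<in>{0..<2*n}. (if r = t then c $ t else 0)) + (\<Sum>t\<in>{0..<2*n}. (if r = i \<and> t = j then l * c $ t else 0)) - (\<Sum>t\<in>{0..<2*n}. (if r = hpart n j \<and> t = hpart n i then l * c $ t else 0))"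
    by (simp only: sum.distrib sum_subtractf)
  also have "\<dots> = c $ r + (if r = i then l * c $ j else 0) - (if r = hpart n j then l * c $ (hpart n i) else 0)"
    using assms h by (simp only: sum.delta' sum_if_conj finite_atLeastLessThan atLeastLessThan_iff le0 simp_thms if_True)
  also have "\<dots> = c $ r + l * ((if r = i then c $ j else 0) - (if r = hpart n j then c $ (hpart n i) else 0))"
    by (rule if2_collect)
  finally show ?thesis .
qed

lemma append_eqI:
  assumes "x \<in> carrier_vec (2*n)" "a \<in> carrier_vec n" "b \<in> carrier_vec n"
    "\<And>r. r < n \<Longrightarrow> x $ r = a $ r" "\<And>r. r < n \<Longrightarrow> x $ (n + r) = b $ r"
  shows "x = a @\<^sub>v b"
proof (rule eq_vecI)
  fix r assume "r < dim_vec (a @\<^sub>v b)"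
  hence r: "r < 2*n" using assms by auto
  show "x $ r = (a @\<^sub>v b) $ r"
  proof (cases "r < n")
    case True thus ?thesis using assms r by simp
  next
    case False
    then obtain s where s: "r = n + s" "s < n" using r by (metis add.commute le_add_diff_inverse2 less_diff_conv2 mult_2 not_less)
    thus ?thesis using assms by simp
  qed
qed (use assms in auto)

definition good_pair :: "nat \<Rightarrow> 'a::comm_ring_1 mat \<Rightarrow> 'a vec \<Rightarrow> 'a vec \<Rightarrow> bool" where
  "good_pair n M v w \<longleftrightarrow> (\<exists>\<sigma>\<in>elem_group n. \<exists>\<rho>\<in>carrier_mat n n. \<sigma> * \<rho> = 1\<^sub>m n \<and> \<rho> * \<sigma> = 1\<^sub>m n \<and>
       M *\<^sub>v (v @\<^sub>v w) = (transpose_mat \<sigma> *\<^sub>v v) @\<^sub>v (\<rho> *\<^sub>v w))"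

lemma good_pairI:
  assumes "\<sigma> \<in> elem_group n" "\<rho> \<in> carrier_mat n n" "\<sigma> * \<rho> = 1\<^sub>m n" "\<rho> * \<sigma> = 1\<^sub>m n"
    "M \<in> carrier_mat (2*n) (2*n)" "v \<in> carrier_vec n" "w \<in> carrier_vec n"
    "\<And>r. r < n \<Longrightarrow> (M *\<^sub>v (v @\<^sub>v w)) $ r = (transpose_mat \<sigma> *\<^sub>v v) $ r"
    "\<And>r. r < n \<Longrightarrow> (M *\<^sub>v (v @\<^sub>v w)) $ (n + r) = (\<rho> *\<^sub>v w) $ r"
  shows "good_pair n M v w"
  unfolding good_pair_def
proof (intro bexI conjI)
  have sc: "\<sigma> \<in> carrier_mat n n" using assms(1) elem_group_carrier by blast
  show "M *\<^sub>v (v @\<^sub>v w) = (transpose_mat \<sigma> *\<^sub>v v) @\<^sub>v (\<rho> *\<^sub>v w)"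
  proof (rule append_eqI[where n = n])
    show "M *\<^sub>v (v @\<^sub>v w) \<in> carrier_vec (2*n)" using assms(5) unfolding carrier_vec_def carrier_mat_def by simp
    show "transpose_mat \<sigma> *\<^sub>v v \<in> carrier_vec n" using sc unfolding carrier_vec_def carrier_mat_def by simp
    show "\<rho> *\<^sub>v w \<in> carrier_vec n" using assms(2) unfolding carrier_vec_def carrier_mat_def by simp
  qed (use assms(8,9) in auto)
qed (use assms in auto)

lemma sum_vw: fixes v w :: "'a::comm_ring_1 vec" assumes "v \<in> carrier_vec n" "w \<in> carrier_vec n" "v \<bullet> w = 1"
  shows "(\<Sum>t<n. w $ t * v $ t) = 1" "(\<Sum>t<n. v $ t * w $ t) = 1"
proof -
  have "(\<Sum>t<n. v $ t * w $ t) = 1" using assms by (auto simp: scalar_prod_def atLeast0LessThan)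
  moreover have "(\<Sum>t<n. w $ t * v $ t) = (\<Sum>t<n. v $ t * w $ t)" by (intro sum.cong refl) (rule mult.commute)
  ultimately show "(\<Sum>t<n. w $ t * v $ t) = 1" "(\<Sum>t<n. v $ t * w $ t) = 1" by simp_all
qed

lemma gen_good:
  assumes n3: "n \<ge> 3" and ij: "i < 2*n" "j < 2*n" "i \<noteq> j"
    and vw: "v \<in> carrier_vec n" "w \<in> carrier_vec n" "v \<bullet> w = 1"
  shows "good_pair n (eo_gen n i j l) v w"
proof -
  have vwc: "v @\<^sub>v w \<in> carrier_vec (2*n)" using vw by (metis append_carrier_vec mult_2)
  have E: "(eo_gen n i j l *\<^sub>v (v @\<^sub>v w)) $ r = (v @\<^sub>v w) $ r + l * ((if r = i then (v @\<^sub>v w) $ j else 0) - (if r = hpart n j then (v @\<^sub>v w) $ (hpart n i) else 0))"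
    if "r < 2*n" for r using eo_gen_mult_vec_index[OF ij(1,2) vwc that] .
  have dv: "dim_vec v = n" "dim_vec w = n" using vw by auto
  let ?V = "\<lambda>t. v $ t" and ?W = "\<lambda>t. w $ t"
  consider (a) "i < n" "j < n" | (b) "n \<le> i" "n \<le> j" | (c) "i < n" "n \<le> j" | (d) "n \<le> i" "j < n" by linarith
  then show ?thesis
  proof cases
    case a
    show ?thesis
    proof (rule good_pairI[where \<sigma> = "elem_mat n j i l" and \<rho> = "elem_mat n j i (-l)"])
      show "elem_mat n j i l \<in> elem_group n" using a ij by (intro elem_group_elem) auto
      show "elem_mat n j i l * elem_mat n j i (- l) = 1\<^sub>m n" using a ij elem_inv by metis
      show "elem_mat n j i (- l) * elem_mat n j i l = 1\<^sub>m n" using a ij elem_inv[of j n i "-l"] by simp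
      fix r assume r: "r < n"
      show "(eo_gen n i j l *\<^sub>v (v @\<^sub>v w)) $ r = (transpose_mat (elem_mat n j i l) *\<^sub>v v) $ r"
        using r a E[of r] vw dv by (simp add: elem_transpose elem_mult_vec hpart_def)
      show "(eo_gen n i j l *\<^sub>v (v @\<^sub>v w)) $ (n + r) = (elem_mat n j i (- l) *\<^sub>v w) $ r"
        using r a E[of "n + r"] vw dv by (auto simp: elem_mult_vec hpart_def)
    qed (use vw in auto)
  next
    case b
    define a' where "a' = i - n"
    define b' where "b' = j - n"
    have ab: "i = n + a'" "j = n + b'" "a' < n" "b' < n" "a' \<noteq> b'" using b ij unfolding a'_def b'_def by auto
    show ?thesis
    proof (rule good_pairI[where \<sigma> = "elem_mat n a' b' (-l)" and \<rho> = "elem_mat n a' b' l"])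
      show "elem_mat n a' b' (-l) \<in> elem_group n" using ab by (intro elem_group_elem) auto
      show "elem_mat n a' b' (-l) * elem_mat n a' b' l = 1\<^sub>m n" using ab elem_inv[of a' n b' "-l"] by simp
      show "elem_mat n a' b' l * elem_mat n a' b' (-l) = 1\<^sub>m n" using ab elem_inv by metis
      fix r assume r: "r < n"
      show "(eo_gen n i j l *\<^sub>v (v @\<^sub>v w)) $ r = (transpose_mat (elem_mat n a' b' (-l)) *\<^sub>v v) $ r"
        using r ab E[of r] vw dv by (auto simp: elem_transpose elem_mult_vec hpart_def)
      show "(eo_gen n i j l *\<^sub>v (v @\<^sub>v w)) $ (n + r) = (elem_mat n a' b' l *\<^sub>v w) $ r"
        using r ab E[of "n + r"] vw dv by (auto simp: elem_mult_vec hpart_def)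
    qed (use vw in auto)
  next
    case c
    define b' where "b' = j - n"
    have ab: "j = n + b'" "b' < n" using c ij unfolding b'_def by auto
    show ?thesis
    proof (cases "i = b'")
      case True
      show ?thesis
      proof (rule good_pairI[where \<sigma> = "1\<^sub>m n" and \<rho> = "1\<^sub>m n"])
        show "1\<^sub>m n \<in> elem_group n" by (rule elem_group.one)
        fix r assume r: "r < n"
        show "(eo_gen n i j l *\<^sub>v (v @\<^sub>v w)) $ r = (transpose_mat (1\<^sub>m n) *\<^sub>v v) $ r"
          using r ab c True E[of r] vw dv by (auto simp: hpart_def)
        show "(eo_gen n i j l *\<^sub>v (v @\<^sub>v w)) $ (n + r) = (1\<^sub>m n *\<^sub>v w) $ r"
          using r ab c True E[of "n + r"] vw dv by (auto simp: hpart_def)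
      qed (use vw in auto)
    next
      case False
      have s0: "(\<Sum>t<n. xv i b' ?W t * ?W t) = 0" using sum_xv_self[of i n b' ?W] False c ab by simp
      show ?thesis
      proof (rule good_pairI[where \<sigma> = "R1 n l ?W (xv i b' ?W)" and \<rho> = "R1 n (-l) ?W (xv i b' ?W)"])
        show "R1 n l ?W (xv i b' ?W) \<in> elem_group n" using suslin[OF n3, of i b'] c ab False by simp
        show "R1 n l ?W (xv i b' ?W) * R1 n (-l) ?W (xv i b' ?W) = 1\<^sub>m n" using R1_inv[OF s0] by simp
        show "R1 n (-l) ?W (xv i b' ?W) * R1 n l ?W (xv i b' ?W) = 1\<^sub>m n" using R1_inv[OF s0] by simp
        fix r assume r: "r < n"
        show "(eo_gen n i j l *\<^sub>v (v @\<^sub>v w)) $ r = (transpose_mat (R1 n l ?W (xv i b' ?W)) *\<^sub>v v) $ r"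
          using r ab c False E[of r] vw dv sum_vw[OF vw] by (auto simp: hpart_def R1_transpose R1_mult_vec xv_def)
        show "(eo_gen n i j l *\<^sub>v (v @\<^sub>v w)) $ (n + r) = (R1 n (-l) ?W (xv i b' ?W) *\<^sub>v w) $ r"
          using r ab c False E[of "n + r"] vw dv s0 by (auto simp: hpart_def R1_mult_vec)
      qed (use vw in auto)
    qed
  next
    case d
    define a' where "a' = i - n"
    have ab: "i = n + a'" "a' < n" using d ij unfolding a'_def by auto
    show ?thesis
    proof (cases "a' = j")
      case True
      show ?thesis
      proof (rule good_pairI[where \<sigma> = "1\<^sub>m n" and \<rho> = "1\<^sub>m n"])
        show "1\<^sub>m n \<in> elem_group n" by (rule elem_group.one)
        fix r assume r: "r < n"
        show "(eo_gen n i j l *\<^sub>v (v @\<^sub>v w)) $ r = (transpose_mat (1\<^sub>m n) *\<^sub>v v) $ r"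
          using r ab d True E[of r] vw dv by (auto simp: hpart_def)
        show "(eo_gen n i j l *\<^sub>v (v @\<^sub>v w)) $ (n + r) = (1\<^sub>m n *\<^sub>v w) $ r"
          using r ab d True E[of "n + r"] vw dv by (auto simp: hpart_def)
      qed (use vw in auto)
    next
      case False
      have s0': "(\<Sum>t<n. xv a' j ?V t * ?V t) = 0" using sum_xv_self[of a' n j ?V] False d ab by simp
      hence s0: "(\<Sum>t<n. ?V t * xv a' j ?V t) = 0" by (simp add: mult.commute)
      have tr: "transpose_mat (R1 n (-l) ?V (xv a' j ?V)) = R1 n (-l) (xv a' j ?V) ?V" by (rule R1_transpose)
      show ?thesis
      proof (rule good_pairI[where \<sigma> = "R1 n (-l) (xv a' j ?V) ?V" and \<rho> = "R1 n l (xv a' j ?V) ?V"])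
        show "R1 n (-l) (xv a' j ?V) ?V \<in> elem_group n"
          using elem_group_transpose[OF suslin[OF n3, of a' j "-l" ?V]] d ab False tr by simp
        show "R1 n (-l) (xv a' j ?V) ?V * R1 n l (xv a' j ?V) ?V = 1\<^sub>m n" using R1_inv[OF s0, of "-l"] by simp
        show "R1 n l (xv a' j ?V) ?V * R1 n (-l) (xv a' j ?V) ?V = 1\<^sub>m n" using R1_inv[OF s0] by simp
        fix r assume r: "r < n"
        show "(eo_gen n i j l *\<^sub>v (v @\<^sub>v w)) $ r = (transpose_mat (R1 n (-l) (xv a' j ?V) ?V) *\<^sub>v v) $ r"
          using r ab d False E[of r] vw dv s0' by (auto simp: hpart_def R1_transpose R1_mult_vec)
        show "(eo_gen n i j l *\<^sub>v (v @\<^sub>v w)) $ (n + r) = (R1 n l (xv a' j ?V) ?V *\<^sub>v w) $ r"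
          using r ab d False E[of "n + r"] vw dv sum_vw[OF vw] by (auto simp: hpart_def R1_mult_vec xv_def)
      qed (use vw in auto)
    qed
  qed
qed

lemma vw_carrier2: "v \<in> carrier_vec n \<Longrightarrow> w \<in> carrier_vec n \<Longrightarrow> v @\<^sub>v w \<in> carrier_vec (2*n)"
  by (metis append_carrier_vec mult_2)

lemma eo_good:
  assumes "M \<in> eo_group n" "n \<ge> 3"
  shows "M \<in> carrier_mat (2*n) (2*n) \<and> (\<forall>v w. v \<in> carrier_vec n \<longrightarrow> w \<in> carrier_vec n \<longrightarrow> v \<bullet> w = 1 \<longrightarrow> good_pair n M v w)"
  using assms(1)
proof (induction rule: eo_group.induct)
  case one
  show ?case
  proof (intro conjI allI impI)
    fix v w :: "'a vec" assume vw: "v \<in> carrier_vec n" "w \<in> carrier_vec n" "v \<bullet> w = 1"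
    show "good_pair n (1\<^sub>m (2*n)) v w"
      unfolding good_pair_def
    proof (intro bexI[of _ "1\<^sub>m n"] bexI[of _ "1\<^sub>m n"] conjI)
      show "1\<^sub>m n \<in> elem_group n" by (rule elem_group.one)
      show "1\<^sub>m (2 * n) *\<^sub>v (v @\<^sub>v w) = (transpose_mat (1\<^sub>m n) *\<^sub>v v) @\<^sub>v (1\<^sub>m n *\<^sub>v w)"
        using vw vw_carrier2[OF vw(1,2)] by simp
    qed auto
  qed simp
next
  case (step A i j l)
  have Ac: "A \<in> carrier_mat (2*n) (2*n)" using step by blast
  show ?case
  proof (intro conjI allI impI)
    show "eo_gen n i j l * A \<in> carrier_mat (2*n) (2*n)" by (rule mult_carrier_mat[OF eo_gen_carrier Ac])
    fix v w :: "'a vec" assume vw: "v \<in> carrier_vec n" "w \<in> carrier_vec n" "v \<bullet> w = 1"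
    have "good_pair n A v w" using step vw by blast
    then obtain \<sigma> \<rho> where s: "\<sigma> \<in> elem_group n" "\<rho> \<in> carrier_mat n n" "\<sigma> * \<rho> = 1\<^sub>m n" "\<rho> * \<sigma> = 1\<^sub>m n"
      and eqA: "A *\<^sub>v (v @\<^sub>v w) = (transpose_mat \<sigma> *\<^sub>v v) @\<^sub>v (\<rho> *\<^sub>v w)"
      unfolding good_pair_def by blast
    have sc: "\<sigma> \<in> carrier_mat n n" using s(1) elem_group_carrier by blast
    define v' where "v' = transpose_mat \<sigma> *\<^sub>v v"
    define w' where "w' = \<rho> *\<^sub>v w"
    have v'c: "v' \<in> carrier_vec n" using sc unfolding v'_def carrier_vec_def carrier_mat_def by simp
    have w'c: "w' \<in> carrier_vec n" using s(2) unfolding w'_def carrier_vec_def carrier_mat_def by simp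
    have "v' \<bullet> w' = v \<bullet> (\<sigma> *\<^sub>v w')"
      unfolding v'_def by (rule transpose_vec_mult_scalar[OF sc w'c vw(1)])
    also have "\<sigma> *\<^sub>v w' = (\<sigma> * \<rho>) *\<^sub>v w" unfolding w'_def using sc s(2) vw(2) by simp
    also have "\<dots> = w" using s(3) vw(2) by simp
    finally have vw': "v' \<bullet> w' = 1" using vw(3) by simp
    have "good_pair n (eo_gen n i j l) v' w'" by (rule gen_good) (use assms(2) step vw' v'c w'c in auto)
    then obtain \<sigma>2 \<rho>2 where s2: "\<sigma>2 \<in> elem_group n" "\<rho>2 \<in> carrier_mat n n" "\<sigma>2 * \<rho>2 = 1\<^sub>m n" "\<rho>2 * \<sigma>2 = 1\<^sub>m n"
      and eqG: "eo_gen n i j l *\<^sub>v (v' @\<^sub>v w') = (transpose_mat \<sigma>2 *\<^sub>v v') @\<^sub>v (\<rho>2 *\<^sub>v w')"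
      unfolding good_pair_def by blast
    have sc2: "\<sigma>2 \<in> carrier_mat n n" using s2(1) elem_group_carrier by blast
      have e1: "\<sigma> * \<sigma>2 \<in> elem_group n" using s(1) s2(1) by (rule elem_group_mult)
      have e2: "\<rho>2 * \<rho> \<in> carrier_mat n n" using s2(2) s(2) by (rule mult_carrier_mat)
      have "\<sigma> * \<sigma>2 * (\<rho>2 * \<rho>) = \<sigma> * (\<sigma>2 * (\<rho>2 * \<rho>))"
        using assoc_mult_mat[OF sc sc2 mult_carrier_mat[OF s2(2) s(2)]] .
      also have "\<sigma>2 * (\<rho>2 * \<rho>) = \<sigma>2 * \<rho>2 * \<rho>" using assoc_mult_mat[OF sc2 s2(2) s(2)] by simp
      also have "\<dots> = \<rho>" using s2(3) s(2) by simp
      also have "\<sigma> * \<rho> = 1\<^sub>m n" by (rule s(3))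
      finally have e3: "\<sigma> * \<sigma>2 * (\<rho>2 * \<rho>) = 1\<^sub>m n" .
      have "\<rho>2 * \<rho> * (\<sigma> * \<sigma>2) = \<rho>2 * (\<rho> * (\<sigma> * \<sigma>2))"
        using assoc_mult_mat[OF s2(2) s(2) mult_carrier_mat[OF sc sc2]] .
      also have "\<rho> * (\<sigma> * \<sigma>2) = \<rho> * \<sigma> * \<sigma>2" using assoc_mult_mat[OF s(2) sc sc2] by simp
      also have "\<dots> = \<sigma>2" using s(4) sc2 by simp
      also have "\<rho>2 * \<sigma>2 = 1\<^sub>m n" by (rule s2(4))
      finally have e4: "\<rho>2 * \<rho> * (\<sigma> * \<sigma>2) = 1\<^sub>m n" .
      have "eo_gen n i j l * A *\<^sub>v (v @\<^sub>v w) = eo_gen n i j l *\<^sub>v (A *\<^sub>v (v @\<^sub>v w))"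
        using Ac vw_carrier2[OF vw(1,2)] by (simp add: assoc_mult_mat_vec[of _ "2*n" "2*n"])
      also have "\<dots> = (transpose_mat \<sigma>2 *\<^sub>v v') @\<^sub>v (\<rho>2 *\<^sub>v w')" using eqA eqG v'_def w'_def by simp
      also have "transpose_mat \<sigma>2 *\<^sub>v v' = transpose_mat (\<sigma> * \<sigma>2) *\<^sub>v v"
        unfolding v'_def using sc sc2 vw(1) by (simp add: transpose_mult[OF sc sc2])
      also have "\<rho>2 *\<^sub>v w' = (\<rho>2 * \<rho>) *\<^sub>v w"
        unfolding w'_def using s(2) s2(2) vw(2) by simp
      finally have e: "eo_gen n i j l * A *\<^sub>v (v @\<^sub>v w) = (transpose_mat (\<sigma> * \<sigma>2) *\<^sub>v v) @\<^sub>v (\<rho>2 * \<rho> *\<^sub>v w)" .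
    show "good_pair n (eo_gen n i j l * A) v w"
      unfolding good_pair_def using e1 e2 e3 e4 e by blast
  qed
qed

theorem theorem4p1:
  fixes n :: nat and v w :: "'a::comm_ring_1 vec" and g :: "'a tens"
  assumes "n \<ge> 3"
    and "v \<in> carrier_vec n" and "w \<in> carrier_vec n"
    and "v \<bullet> w = 1"
    and "g \<in> epin_set n"
  shows "\<exists>\<sigma> \<in> elem_group n. \<exists>\<tau> \<in> carrier_mat n n.
           transpose_mat \<sigma> * \<tau> = 1\<^sub>m n \<and> \<tau> * transpose_mat \<sigma> = 1\<^sub>m n \<and>
           (\<forall>y. clif_inverse n g y \<longrightarrow>
              clif_eq n (tmul g (tmul (hyp_emb n (v @\<^sub>v w)) y))
                        (hyp_emb n ((transpose_mat \<sigma> *\<^sub>v v) @\<^sub>v (transpose_mat \<tau> *\<^sub>v w))))"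
proof -
  obtain M where M: "M \<in> eo_group n" and Mp: "\<forall>y. clif_inverse n g y \<longrightarrow>
      (\<forall>c \<in> carrier_vec (2*n). clif_eq n (tmul g (tmul (hyp_emb n c) y)) (hyp_emb n (M *\<^sub>v c)))"
    using assms(5) unfolding epin_set_def by blast
  have "good_pair n M v w" using eo_good[OF M assms(1)] assms(2-4) by blast
  then obtain \<sigma> \<rho> where s: "\<sigma> \<in> elem_group n" "\<rho> \<in> carrier_mat n n" "\<sigma> * \<rho> = 1\<^sub>m n" "\<rho> * \<sigma> = 1\<^sub>m n"
      and eqM: "M *\<^sub>v (v @\<^sub>v w) = (transpose_mat \<sigma> *\<^sub>v v) @\<^sub>v (\<rho> *\<^sub>v w)"
    unfolding good_pair_def by blast
  have sc: "\<sigma> \<in> carrier_mat n n" using s(1) elem_group_carrier by blast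
  have t1: "transpose_mat \<rho> \<in> carrier_mat n n" using s(2) by simp
  have t2: "transpose_mat \<sigma> * transpose_mat \<rho> = 1\<^sub>m n"
    using transpose_mult[OF s(2) sc] s(4) by simp
  have t3: "transpose_mat \<rho> * transpose_mat \<sigma> = 1\<^sub>m n"
    using transpose_mult[OF sc s(2)] s(3) by simp
  have t4: "\<forall>y. clif_inverse n g y \<longrightarrow> clif_eq n (tmul g (tmul (hyp_emb n (v @\<^sub>v w)) y))
                        (hyp_emb n ((transpose_mat \<sigma> *\<^sub>v v) @\<^sub>v (transpose_mat (transpose_mat \<rho>) *\<^sub>v w)))"
  proof (intro allI impI)
    fix y assume "clif_inverse n g y"
    hence "clif_eq n (tmul g (tmul (hyp_emb n (v @\<^sub>v w)) y)) (hyp_emb n (M *\<^sub>v (v @\<^sub>v w)))"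
      using Mp vw_carrier2[OF assms(2,3)] by blast
    thus "clif_eq n (tmul g (tmul (hyp_emb n (v @\<^sub>v w)) y))
                        (hyp_emb n ((transpose_mat \<sigma> *\<^sub>v v) @\<^sub>v (transpose_mat (transpose_mat \<rho>) *\<^sub>v w)))"
      using eqM by simp
  qed
  show ?thesis using s(1) t1 t2 t3 t4 by blast
qed

end
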